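(* Let $\mathscr D_n$ be a finite b-quad-graph with associated graph $G_n$, let $\alpha_n$ be an admissible labelling, and let $\mathscr C_n,\widetilde{\mathscr C}_n$ be embedded convex $q$-bounded circle patterns for $\mathscr D_n$ and $\alpha_n$ with radius functions $r_n,\tilde r_n$. Let $u_n(v)=\tilde r_n(v)/r_n(v)$. Define two Laplacians on functions $h:V(G_n)\to\mathbb R$ by $\Delta h(v_0)=\sum_{[v_0,v]\in E(G_n)}\mu([v_0,v])(h(v)-h(v_0))$ and $\widetilde\Delta h(v_0)=\sum_{[v_0,v]\in E(G_n)}\tilde\mu([v_0,v])(h(v)-h(v_0))$, where $\mu([v_0,v])=2f'_{\alpha_n([v_0,v])}(\log(r_n(v)/r_n(v_0)))$ and $\tilde\mu([v_0,v])=2f'_{\alpha_n([v_0,v])}(\log(\tilde r_n(v)/\tilde r_n(v_0)))$, with $f'_\theta(x)=\frac{\sin\theta}{2(\cosh x-\cos\theta)}$. Then for all interior vertices $v$ of $G_n$, $\Delta u_n(v)\ge0$ and $\widetilde\Delta(1/u_n)(v)\ge0$.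
   Context: A b-quad-graph: strongly regular cell decomposition into quadrilaterals with bipartite 1-skeleton (white/black vertices); $G_n$ has the white vertices, adjacent iff incident to a common face. Admissible labelling: at each interior black vertex the labels of incident faces sum to $2\pi$. Circle pattern: circles with circles of adjacent vertices intersecting at exterior angle $\alpha$ (angle at an intersection point between the radii to the two centers), with equally oriented kites formed by centers and intersection points, locally isomorphic to the b-quad-graph at interior vertices; embedded: kites have disjoint interiors and meet in an edge/vertex iff the faces do. Convex $q$-bounded ($q>1$): all kites convex and each kite's diagonal length ratio lies in $[1/q,q]$. *)

theory Defs
  imports "HOL-Analysis.Analysis"
begin

text \<open>A b-quad-graph is given by its white vertices, black vertices, faces and,
for every face f, the cyclic (positively oriented) list of its four vertices
qd f = (a, b, c, d) with a, c white and b, d black.\<close>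

record ('v, 'f) bquad =
  wht :: "'v set"
  blk :: "'v set"
  fcs :: "'f set"
  qd  :: "'f \<Rightarrow> 'v \<times> 'v \<times> 'v \<times> 'v"

definition fverts :: "('v,'f) bquad \<Rightarrow> 'f \<Rightarrow> 'v set" where
  "fverts D f = (case qd D f of (a,b,c,d) \<Rightarrow> {a,b,c,d})"

definition fedges :: "('v,'f) bquad \<Rightarrow> 'f \<Rightarrow> 'v set set" where
  "fedges D f = (case qd D f of (a,b,c,d) \<Rightarrow> {{a,b},{b,c},{c,d},{d,a}})"

definition fdedges :: "('v,'f) bquad \<Rightarrow> 'f \<Rightarrow> ('v \<times> 'v) set" where
  "fdedges D f = (case qd D f of (a,b,c,d) \<Rightarrow> {(a,b),(b,c),(c,d),(d,a)})"

definition bq_vertices :: "('v,'f) bquad \<Rightarrow> 'v set" where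
  "bq_vertices D = (\<Union>f\<in>fcs D. fverts D f)"

definition bq_edges :: "('v,'f) bquad \<Rightarrow> 'v set set" where
  "bq_edges D = (\<Union>f\<in>fcs D. fedges D f)"

definition faces_at :: "('v,'f) bquad \<Rightarrow> 'v \<Rightarrow> 'f set" where
  "faces_at D v = {f \<in> fcs D. v \<in> fverts D f}"

definition faces_of_edge :: "('v,'f) bquad \<Rightarrow> 'v set \<Rightarrow> 'f set" where
  "faces_of_edge D e = {f \<in> fcs D. e \<in> fedges D f}"

definition link_rel :: "('v,'f) bquad \<Rightarrow> 'v \<Rightarrow> ('f \<times> 'f) set" where
  "link_rel D v = {(f,g). f \<in> faces_at D v \<and> g \<in> faces_at D v \<and>
                          (\<exists>e \<in> fedges D f \<inter> fedges D g. v \<in> e)}"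

definition face_adj :: "('v,'f) bquad \<Rightarrow> ('f \<times> 'f) set" where
  "face_adj D = {(f,g). f \<in> fcs D \<and> g \<in> fcs D \<and> fverts D f \<inter> fverts D g \<noteq> {}}"

definition finite_bquad :: "('v,'f) bquad \<Rightarrow> bool" where
  "finite_bquad D \<longleftrightarrow>
     finite (wht D) \<and> finite (blk D) \<and> finite (fcs D) \<and> fcs D \<noteq> {} \<and>
     wht D \<inter> blk D = {} \<and>
     bq_vertices D = wht D \<union> blk D \<and>
     (\<forall>f\<in>fcs D. case qd D f of (a,b,c,d) \<Rightarrow>
         a \<in> wht D \<and> c \<in> wht D \<and> b \<in> blk D \<and> d \<in> blk D \<and> a \<noteq> c \<and> b \<noteq> d) \<and>
     \<comment> \<open>strong regularity: two distinct faces meet in nothing, a vertex or an edge\<close>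
     (\<forall>f\<in>fcs D. \<forall>g\<in>fcs D. f \<noteq> g \<longrightarrow>
         fverts D f \<noteq> fverts D g \<and>
         (fverts D f \<inter> fverts D g = {} \<or> card (fverts D f \<inter> fverts D g) = 1 \<or>
          fverts D f \<inter> fverts D g \<in> fedges D f \<inter> fedges D g)) \<and>
     \<comment> \<open>oriented surface: an edge lies in at most two faces, traversed oppositely\<close>
     (\<forall>f\<in>fcs D. \<forall>g\<in>fcs D. f \<noteq> g \<longrightarrow> fdedges D f \<inter> fdedges D g = {}) \<and>
     \<comment> \<open>manifold condition: the link of every vertex is connected\<close>
     (\<forall>v\<in>bq_vertices D. faces_at D v \<times> faces_at D v \<subseteq> (link_rel D v)\<^sup>*) \<and>
     \<comment> \<open>connectedness\<close>
     fcs D \<times> fcs D \<subseteq> (face_adj D)\<^sup>*"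

definition interior_vertex :: "('v,'f) bquad \<Rightarrow> 'v \<Rightarrow> bool" where
  "interior_vertex D v \<longleftrightarrow> v \<in> bq_vertices D \<and>
     (\<forall>e\<in>bq_edges D. v \<in> e \<longrightarrow> card (faces_of_edge D e) = 2)"

definition G_edges :: "('v,'f) bquad \<Rightarrow> 'v set set" where
  "G_edges D = {{v,w} | v w. v \<in> wht D \<and> w \<in> wht D \<and> v \<noteq> w \<and>
                            (\<exists>f\<in>fcs D. v \<in> fverts D f \<and> w \<in> fverts D f)}"

text \<open>The face corresponding to an edge of G (unique by strong regularity).\<close>
definition G_face :: "('v,'f) bquad \<Rightarrow> 'v set \<Rightarrow> 'f" where
  "G_face D e = (THE f. f \<in> fcs D \<and> e \<subseteq> fverts D f)"

definition admissible :: "('v,'f) bquad \<Rightarrow> ('f \<Rightarrow> real) \<Rightarrow> bool" where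
  "admissible D \<alpha> \<longleftrightarrow>
     (\<forall>f\<in>fcs D. 0 < \<alpha> f \<and> \<alpha> f < pi) \<and>
     (\<forall>b\<in>blk D. interior_vertex D b \<longrightarrow> (\<Sum>f\<in>faces_at D b. \<alpha> f) = 2 * pi)"

definition arg2pi :: "complex \<Rightarrow> real" where
  "arg2pi w = (if Arg w < 0 then Arg w + 2 * pi else Arg w)"

text \<open>z gives the centres (white vertices) and intersection points (black
vertices). Interior angle of the kite of face f at vertex v, for the cyclic
order of qd (positive orientation): rotation from (next - v) to (prev - v).\<close>
definition kangle :: "('v,'f) bquad \<Rightarrow> ('v \<Rightarrow> complex) \<Rightarrow> 'f \<Rightarrow> 'v \<Rightarrow> real" where
  "kangle D z f v = (case qd D f of (a,b,c,d) \<Rightarrow>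
      if v = a then arg2pi ((z d - z a) / (z b - z a))
      else if v = b then arg2pi ((z a - z b) / (z c - z b))
      else if v = c then arg2pi ((z b - z c) / (z d - z c))
      else arg2pi ((z c - z d) / (z a - z d)))"

definition kite :: "('v,'f) bquad \<Rightarrow> ('v \<Rightarrow> complex) \<Rightarrow> 'f \<Rightarrow> complex set" where
  "kite D z f = (case qd D f of (a,b,c,d) \<Rightarrow>
      convex hull {z a, z b, z c} \<union> convex hull {z a, z c, z d})"

text \<open>Circle pattern for D and \<alpha> with centres/intersection points z and radius
function r: for each face (a,b,c,d), the points z b, z d are the two distinct
intersection points of the circles around z a, z c; the kite angle at the
intersection points is \<alpha> f (this also fixes the common positive orientation
of all kites); and locally around every interior vertex the kites close up
with total angle 2 pi (local isomorphism with the b-quad-graph).\<close>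
definition circle_pattern ::
  "('v,'f) bquad \<Rightarrow> ('f \<Rightarrow> real) \<Rightarrow> ('v \<Rightarrow> complex) \<Rightarrow> ('v \<Rightarrow> real) \<Rightarrow> bool" where
  "circle_pattern D \<alpha> z r \<longleftrightarrow>
     (\<forall>v\<in>wht D. r v > 0) \<and>
     (\<forall>f\<in>fcs D. case qd D f of (a,b,c,d) \<Rightarrow>
        cmod (z b - z a) = r a \<and> cmod (z b - z c) = r c \<and>
        cmod (z d - z a) = r a \<and> cmod (z d - z c) = r c \<and> z b \<noteq> z d \<and>
        kangle D z f b = \<alpha> f \<and> kangle D z f d = \<alpha> f) \<and>
     (\<forall>v\<in>bq_vertices D. interior_vertex D v \<longrightarrow>
        (\<Sum>f\<in>faces_at D v. kangle D z f v) = 2 * pi)"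

definition embedded_pattern :: "('v,'f) bquad \<Rightarrow> ('v \<Rightarrow> complex) \<Rightarrow> bool" where
  "embedded_pattern D z \<longleftrightarrow>
     (\<forall>f\<in>fcs D. \<forall>g\<in>fcs D. f \<noteq> g \<longrightarrow>
        interior (kite D z f) \<inter> interior (kite D z g) = {} \<and>
        kite D z f \<inter> kite D z g = convex hull (z ` (fverts D f \<inter> fverts D g)))"

definition convex_q_bounded :: "real \<Rightarrow> ('v,'f) bquad \<Rightarrow> ('v \<Rightarrow> complex) \<Rightarrow> bool" where
  "convex_q_bounded q D z \<longleftrightarrow>
     (\<forall>f\<in>fcs D. convex (kite D z f) \<and>
        (case qd D f of (a,b,c,d) \<Rightarrow>
           1 / q \<le> cmod (z a - z c) / cmod (z b - z d) \<and>
           cmod (z a - z c) / cmod (z b - z d) \<le> q))"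

definition fprime :: "real \<Rightarrow> real \<Rightarrow> real" where
  "fprime \<theta> x = sin \<theta> / (2 * (cosh x - cos \<theta>))"

definition laplacian ::
  "('v,'f) bquad \<Rightarrow> ('f \<Rightarrow> real) \<Rightarrow> ('v \<Rightarrow> real) \<Rightarrow> ('v \<Rightarrow> real) \<Rightarrow> 'v \<Rightarrow> real" where
  "laplacian D \<alpha> r h v0 =
     (\<Sum>v\<in>{v. {v0, v} \<in> G_edges D}.
        2 * fprime (\<alpha> (G_face D {v0, v})) (ln (r v / r v0)) * (h v - h v0))"

end

theory Submission
  imports Defs
begin


definition phi :: "real \<Rightarrow> real \<Rightarrow> real" where
  "phi a y = pi/2 - arctan ((1 - y * cos a) / (y * sin a))"

definition dphi :: "real \<Rightarrow> real \<Rightarrow> real" where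
  "dphi a y = sin a / (y\<^sup>2 - 2 * y * cos a + 1)"

lemma denom_pos:
  assumes "0 < a" "a < pi"
  shows "y\<^sup>2 - 2 * y * cos a + 1 > 0"
proof -
  have s: "sin a > 0" using assms sin_gt_zero by auto
  have "y\<^sup>2 - 2 * y * cos a + 1 = (y - cos a)\<^sup>2 + (sin a)\<^sup>2"
    using sin_cos_squared_add[of a] by (simp add: power2_eq_square algebra_simps)
  also have "\<dots> > 0" using s by (simp add: add_nonneg_pos)
  finally show ?thesis .
qed

lemma phi_deriv:
  assumes "0 < a" "a < pi" "x > 0"
  shows "DERIV (phi a) x :> dphi a x"
proof -
  have s: "sin a > 0" using assms sin_gt_zero by auto
  have d: "DERIV (\<lambda>x. pi/2 - arctan ((1 - x * cos a) / (x * sin a))) x :>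
     - (inverse (1 + ((1 - x * cos a) / (x * sin a))\<^sup>2) *
       (((- cos a) * (x * sin a) - (1 - x * cos a) * sin a) / (x * sin a)\<^sup>2))"
    using assms s
    by (auto intro!: derivative_eq_intros simp: power2_eq_square)
  have pos: "x\<^sup>2 - 2 * x * cos a + 1 > 0" using denom_pos assms by auto
  have "- (inverse (1 + ((1 - x * cos a) / (x * sin a))\<^sup>2) *
       (((- cos a) * (x * sin a) - (1 - x * cos a) * sin a) / (x * sin a)\<^sup>2)) = dphi a x"
  proof -
    have e1: "1 + ((1 - x * cos a) / (x * sin a))\<^sup>2 = (x\<^sup>2 - 2 * x * cos a + 1) / (x * sin a)\<^sup>2"
      using s assms sin_cos_squared_add[of a]
      by (simp add: field_simps power2_eq_square) (metis distrib_left mult_1_right sin_cos_squared_add3 add.commute)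
    have e2: "((- cos a) * (x * sin a) - (1 - x * cos a) * sin a) = - sin a"
      by (simp add: algebra_simps)
    show ?thesis unfolding e1 e2 dphi_def using s assms pos
      by (simp add: field_simps power2_eq_square)
  qed
  then show ?thesis using d unfolding phi_def by simp
qed

lemma phi_concave:
  assumes "0 < a" "a < pi" "y > 0" "y' > 0" "cos a \<le> y" "cos a \<le> y'"
  shows "phi a y' - phi a y \<le> dphi a y * (y' - y)"
proof -
  have s: "sin a > 0" using assms sin_gt_zero by auto
  have mono: "dphi a \<xi> \<le> dphi a x" if "(x - cos a)\<^sup>2 \<le> (\<xi> - cos a)\<^sup>2" for x \<xi>
  proof -
    have ex: "x\<^sup>2 - 2 * x * cos a + 1 = (x - cos a)\<^sup>2 + (sin a)\<^sup>2"
      using sin_cos_squared_add[of a] by (simp add: power2_eq_square algebra_simps)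
    have exi: "\<xi>\<^sup>2 - 2 * \<xi> * cos a + 1 = (\<xi> - cos a)\<^sup>2 + (sin a)\<^sup>2"
      using sin_cos_squared_add[of a] by (simp add: power2_eq_square algebra_simps)
    have p: "(x - cos a)\<^sup>2 + (sin a)\<^sup>2 > 0" using s by (simp add: add_nonneg_pos)
    show ?thesis unfolding dphi_def ex exi
      using s p that by (intro divide_left_mono) (auto intro: mult_pos_pos)
  qed
  consider "y' = y" | "y < y'" | "y' < y" by linarith
  then show ?thesis
  proof cases
    case 1 then show ?thesis by simp
  next
    case 2
    obtain \<xi> where \<xi>: "y < \<xi>" "\<xi> < y'" "phi a y' - phi a y = (y' - y) * dphi a \<xi>"
      using MVT2[OF 2, of "phi a" "dphi a"] phi_deriv assms by force
    have "(y - cos a)\<^sup>2 \<le> (\<xi> - cos a)\<^sup>2" using \<xi> assms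
      by (intro power_mono) auto
    then have "dphi a \<xi> \<le> dphi a y" by (rule mono)
    then show ?thesis using \<xi> 2 by (simp add: mult.commute mult_right_mono)
  next
    case 3
    obtain \<xi> where \<xi>: "y' < \<xi>" "\<xi> < y" "phi a y - phi a y' = (y - y') * dphi a \<xi>"
      using MVT2[OF 3, of "phi a" "dphi a"] phi_deriv assms by force
    have "(\<xi> - cos a)\<^sup>2 \<le> (y - cos a)\<^sup>2" using \<xi> assms
      by (intro power_mono) auto
    then have "dphi a y \<le> dphi a \<xi>" by (rule mono)
    then have "(y - y') * dphi a y \<le> (y - y') * dphi a \<xi>" using 3 by (simp add: mult_left_mono)
    then show ?thesis using \<xi> by (simp add: algebra_simps)
  qed
qed

lemma fprime_ln:
  assumes "y > 0" "0 < a" "a < pi"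
  shows "fprime a (ln y) = y * dphi a y"
proof -
  have c: "cosh (ln y) = (y + 1/y) / 2" using assms
    by (simp add: cosh_def exp_minus field_simps)
  have pos: "y\<^sup>2 - 2 * y * cos a + 1 > 0" using denom_pos assms by auto
  show ?thesis unfolding fprime_def dphi_def c using assms pos
    by (simp add: field_simps power2_eq_square)
qed



lemma arg2pi_eqD:
  assumes "arg2pi q = a" "0 < a" "a < pi"
  shows "q \<noteq> 0 \<and> q = of_real (cmod q) * cis a"
proof -
  have b: "- pi < Arg q" "Arg q \<le> pi" using Arg_bounded[of q] by auto
  have "Arg q = a" using assms b unfolding arg2pi_def by (auto split: if_splits)
  moreover have "q \<noteq> 0" using assms \<open>Arg q = a\<close> Arg_zero by auto
  ultimately show ?thesis using rcis_cmod_Arg[of q] by (simp add: rcis_def)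
qed

lemma arg2pi_cis:
  assumes "0 < x" "x < 2 * pi"
  shows "arg2pi (cis x) = x"
proof (cases "x \<le> pi")
  case True
  then show ?thesis using assms Arg_cis[of x] unfolding arg2pi_def by auto
next
  case False
  have "cis x = cis (x - 2 * pi)" by (simp add: complex_eq_iff cos_diff sin_diff)
  then have "Arg (cis x) = x - 2 * pi" using False assms Arg_cis[of "x - 2*pi"] by auto
  then show ?thesis using False assms unfolding arg2pi_def by auto
qed

lemma cnjW_cis:
  assumes "Im W < 0"
  shows "cnj W / W = cis (2 * (pi/2 - arctan (Re W / (- Im W))))"
proof -
  define g where "g = Re W / (- Im W)"
  have q: "(sqrt (1 + g\<^sup>2))\<^sup>2 = 1 + g\<^sup>2" by simp
  have N: "(Re W)\<^sup>2 + (Im W)\<^sup>2 > 0" using assms by (simp add: add_nonneg_pos)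
  have c2: "cos (2 * (pi/2 - arctan g)) = (g\<^sup>2 - 1) / (1 + g\<^sup>2)"
    unfolding cos_double by (simp add: cos_diff sin_diff sin_arctan cos_arctan power_divide q diff_divide_distrib)
  have s2: "sin (2 * (pi/2 - arctan g)) = 2 * g / (1 + g\<^sup>2)"
    unfolding sin_double by (simp add: cos_diff sin_diff sin_arctan cos_arctan q)
  have I0: "Im W \<noteq> 0" using assms by simp
  have e: "(g\<^sup>2 - 1) / (1 + g\<^sup>2) = ((Re W)\<^sup>2 - (Im W)\<^sup>2) / ((Re W)\<^sup>2 + (Im W)\<^sup>2)"
  proof -
    have "(g\<^sup>2 - 1) = ((Re W)\<^sup>2 - (Im W)\<^sup>2) / (Im W)\<^sup>2"
      unfolding g_def using I0 by (simp add: power_divide field_simps)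
    moreover have "(1 + g\<^sup>2) = ((Re W)\<^sup>2 + (Im W)\<^sup>2) / (Im W)\<^sup>2"
      unfolding g_def using I0 by (simp add: power_divide field_simps)
    ultimately show ?thesis using I0 by simp
  qed
  have "Re (cnj W / W) = (g\<^sup>2 - 1) / (1 + g\<^sup>2)"
    unfolding e by (simp add: Re_divide power2_eq_square)
  moreover have "Im (cnj W / W) = 2 * g / (1 + g\<^sup>2)"
    using assms N unfolding g_def by (simp add: Im_divide field_simps power2_eq_square)
  ultimately show ?thesis using c2 s2 unfolding g_def by (simp add: complex_eq_iff)
qed



lemma HL1:
  assumes "Im W \<noteq> 0" "w \<le> 1"
    and e: "(1 / cnj W + 1 / W) / 2 = of_real v / cnj W + of_real w"
  shows "Re W \<le> (Re W)\<^sup>2 + (Im W)\<^sup>2"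
proof -
  have N: "(Re W)\<^sup>2 + (Im W)\<^sup>2 > 0" using assms by (simp add: add_nonneg_pos)
  have "Im ((1 / cnj W + 1 / W) / 2) = Im (of_real v / cnj W + of_real w)" using e by (rule arg_cong)
  then have "0 = v * Im W / ((Re W)\<^sup>2 + (Im W)\<^sup>2)" by (simp add: Im_divide)
  then have v: "v = 0" using N assms by simp
  have "Re ((1 / cnj W + 1 / W) / 2) = Re (of_real v / cnj W + of_real w)" using e by (rule arg_cong)
  then have "Re W * 4 = w * (4 * (Re W)\<^sup>2 + 4 * (Im W)\<^sup>2)" using v N by (simp add: Re_divide) (simp add: field_simps algebra_simps)
  then have "Re W = w * ((Re W)\<^sup>2 + (Im W)\<^sup>2)" by (simp add: algebra_simps)
  also have "\<dots> \<le> 1 * ((Re W)\<^sup>2 + (Im W)\<^sup>2)" using assms N by (intro mult_right_mono) auto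
  finally show ?thesis by simp
qed

lemma HL2:
  assumes "Im W \<noteq> 0" "v \<le> 1"
    and e: "(1 / cnj W + 1 / W) / 2 = of_real v + of_real w / W"
  shows "Re W \<le> (Re W)\<^sup>2 + (Im W)\<^sup>2"
proof -
  have N: "(Re W)\<^sup>2 + (Im W)\<^sup>2 > 0" using assms by (simp add: add_nonneg_pos)
  have "Im ((1 / cnj W + 1 / W) / 2) = Im (of_real v + of_real w / W)" using e by (rule arg_cong)
  then have "0 = - w * Im W / ((Re W)\<^sup>2 + (Im W)\<^sup>2)" by (simp add: Im_divide)
  then have w: "w = 0" using N assms by simp
  have "Re ((1 / cnj W + 1 / W) / 2) = Re (of_real v + of_real w / W)" using e by (rule arg_cong)
  then have "Re W * 4 = v * (4 * (Re W)\<^sup>2 + 4 * (Im W)\<^sup>2)" using w N by (simp add: Re_divide) (simp add: field_simps algebra_simps)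
  then have "Re W = v * ((Re W)\<^sup>2 + (Im W)\<^sup>2)" by (simp add: algebra_simps)
  also have "\<dots> \<le> 1 * ((Re W)\<^sup>2 + (Im W)\<^sup>2)" using assms N by (intro mult_right_mono) auto
  finally show ?thesis by simp
qed

lemma GL:
  fixes za zb zc zd :: complex and ra rc a :: real
  assumes ra: "ra > 0" and rc: "rc > 0" and a: "0 < a" "a < pi"
    and m1: "cmod (zb - za) = ra" and m2: "cmod (zb - zc) = rc"
    and m3: "cmod (zd - za) = ra" and m4: "cmod (zd - zc) = rc"
    and ab: "arg2pi ((za - zb) / (zc - zb)) = a"
    and ad: "arg2pi ((zc - zd) / (za - zd)) = a"
    and cv: "convex (convex hull {za,zb,zc} \<union> convex hull {za,zc,zd})"
  shows "arg2pi ((zd - za) / (zb - za)) = 2 * phi a (rc / ra) \<and> cos a \<le> rc / ra"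
proof -
  define y where "y = rc / ra"
  define \<beta> where "\<beta> = cis a"
  define W where "W = 1 - of_real y * \<beta>"
  have y: "y > 0" using ra rc by (simp add: y_def)
  have sa: "sin a > 0" using a sin_gt_zero by auto
  obtain qb where qb: "qb = (za - zb) / (zc - zb)" by simp
  have qb1: "qb \<noteq> 0" "qb = of_real (cmod qb) * \<beta>" using arg2pi_eqD[OF ab a] qb \<beta>_def by auto
  have nzb: "zc - zb \<noteq> 0" using qb1 qb by auto
  have cqb: "cmod qb = ra / rc" using qb m1 m2 by (simp add: norm_divide norm_minus_commute)
  have hb0: "za - zb = qb * (zc - zb)" using qb nzb by simp
  have hb: "za - zb = of_real (ra / rc) * \<beta> * (zc - zb)"
    using hb0 qb1(2) cqb by simp
  obtain qd where qd: "qd = (zc - zd) / (za - zd)" by simp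
  have qd1: "qd \<noteq> 0" "qd = of_real (cmod qd) * \<beta>" using arg2pi_eqD[OF ad a] qd \<beta>_def by auto
  have nzd: "za - zd \<noteq> 0" using qd1 qd by auto
  have cqd: "cmod qd = rc / ra" using qd m3 m4 by (simp add: norm_divide norm_minus_commute)
  have hd0: "zc - zd = qd * (za - zd)" using qd nzd by simp
  have hd: "zc - zd = of_real y * \<beta> * (za - zd)"
    using hd0 qd1(2) cqd by (simp add: y_def)
  have bb: "\<beta> * cnj \<beta> = 1" unfolding \<beta>_def by (simp add: cis_cnj cis_mult)
  have ReW: "Re W = 1 - y * cos a" and ImW: "Im W = - (y * sin a)"
    unfolding W_def \<beta>_def by simp_all
  have ImW0: "Im W < 0" using ImW y sa by simp
  have W0: "W \<noteq> 0" using ImW0 by auto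
  have cW0: "cnj W \<noteq> 0" using W0 by simp
  have cW: "cnj W = 1 - of_real y * cnj \<beta>" unfolding W_def by simp
  have t1: "zc - za = (zd - za) * W"
  proof -
    have "(zd - za) * W = (zd - za) + of_real y * \<beta> * (za - zd)"
      by (simp add: W_def algebra_simps)
    also have "\<dots> = zc - za" using hd[symmetric] by simp
    finally show ?thesis by simp
  qed
  have hb': "zc - zb = of_real y * cnj \<beta> * (za - zb)"
  proof -
    have "of_real y * cnj \<beta> * (za - zb) = of_real (y * (ra / rc)) * (\<beta> * cnj \<beta>) * (zc - zb)"
      unfolding hb by (simp add: algebra_simps)
    also have "\<dots> = zc - zb" using ra rc bb by (simp add: y_def)
    finally show ?thesis by simp
  qed
  have t2: "zc - za = (zb - za) * cnj W"
  proof -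
    have "(zb - za) * cnj W = (zb - za) + of_real y * cnj \<beta> * (za - zb)"
      by (simp add: cW algebra_simps)
    also have "\<dots> = zc - za" using hb'[symmetric] by simp
    finally show ?thesis by simp
  qed
  have p0: "zb - za \<noteq> 0" using m1 ra by auto
  have s0: "zd - za \<noteq> 0" using m3 ra by auto
  have sp: "(zd - za) / (zb - za) = cnj W / W"
    using t1 t2 p0 W0 by (simp add: frac_eq_eq mult.commute)
  have g: "Re W / (- Im W) = (1 - y * cos a) / (y * sin a)" using ReW ImW by simp
  have cisr: "cnj W / W = cis (2 * phi a y)"
    using cnjW_cis[OF ImW0] unfolding g phi_def .
  have ph: "0 < phi a y" "phi a y < pi"
    unfolding phi_def using arctan_bounded[of "(1 - y * cos a) / (y * sin a)"] by auto
  have A1: "arg2pi ((zd - za) / (zb - za)) = 2 * phi a y"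
    unfolding sp cisr using ph by (intro arg2pi_cis) auto
  define t where "t = zc - za"
  have t0: "t \<noteq> 0" using t2 p0 cW0 by (simp add: t_def)
  have zb: "zb = za + t / cnj W" using t2 cW0 by (simp add: t_def field_simps)
  have zd: "zd = za + t / W" using t1 W0 by (simp add: t_def field_simps)
  have zc: "zc = za + t" by (simp add: t_def)
  let ?K = "convex hull {za,zb,zc} \<union> convex hull {za,zc,zd}"
  have "zb \<in> ?K" "zd \<in> ?K" by (auto intro: hull_inc)
  then have "(1/2) *\<^sub>R zb + (1/2) *\<^sub>R zd \<in> ?K" using cv by (intro convexD) auto
  then have mK: "(zb + zd) / 2 \<in> ?K" by (simp add: scaleR_conv_of_real field_simps)
  have key: "Re W \<le> (Re W)\<^sup>2 + (Im W)\<^sup>2"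
  proof (cases "(zb + zd) / 2 \<in> convex hull {za,zb,zc}")
    case True
    then obtain u v w where uvw: "0 \<le> u" "0 \<le> v" "0 \<le> w" "u + v + w = 1"
      "(zb + zd) / 2 = u *\<^sub>R za + v *\<^sub>R zb + w *\<^sub>R zc"
      unfolding convex_hull_3 by blast
    have u: "u = 1 - v - w" using uvw by simp
    have "t * ((1 / cnj W + 1 / W) / 2) = t * (of_real v / cnj W + of_real w)"
      using uvw(5) unfolding u zb zd zc
      by (simp add: scaleR_conv_of_real algebra_simps add_divide_distrib diff_divide_distrib)
    then have "(1 / cnj W + 1 / W) / 2 = of_real v / cnj W + of_real w" using t0 by simp
    from HL1[OF _ _ this] show ?thesis using ImW0 uvw by auto
  next
    case False
    then have "(zb + zd) / 2 \<in> convex hull {za,zc,zd}" using mK by blast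
    then obtain u v w where uvw: "0 \<le> u" "0 \<le> v" "0 \<le> w" "u + v + w = 1"
      "(zb + zd) / 2 = u *\<^sub>R za + v *\<^sub>R zc + w *\<^sub>R zd"
      unfolding convex_hull_3 by blast
    have u: "u = 1 - v - w" using uvw by simp
    have "t * ((1 / cnj W + 1 / W) / 2) = t * (of_real v + of_real w / W)"
      using uvw(5) unfolding u zb zd zc
      by (simp add: scaleR_conv_of_real algebra_simps add_divide_distrib diff_divide_distrib)
    then have "(1 / cnj W + 1 / W) / 2 = of_real v + of_real w / W" using t0 by simp
    from HL2[OF _ _ this] show ?thesis using ImW0 uvw by auto
  qed
  have "y * cos a \<le> y\<^sup>2"
  proof -
    have "(Re W)\<^sup>2 + (Im W)\<^sup>2 = 1 - 2 * y * cos a + y\<^sup>2"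
      unfolding ReW ImW by (simp add: power2_eq_square algebra_simps) (metis distrib_left mult_1_right sin_cos_squared_add3 add.commute)
    then show ?thesis using key ReW by simp
  qed
  then have "cos a \<le> y" using y by (simp add: power2_eq_square)
  then show ?thesis using A1 by (simp add: y_def)
qed



definition oth :: "('v,'f) bquad \<Rightarrow> 'v \<Rightarrow> 'f \<Rightarrow> 'v" where
  "oth D v f = (case qd D f of (a,b,c,d) \<Rightarrow> if v = a then c else a)"

lemma face_facts:
  assumes "finite_bquad D" "f \<in> fcs D" "qd D f = (a,b,c,d)"
  shows "a \<in> wht D \<and> c \<in> wht D \<and> b \<in> blk D \<and> d \<in> blk D \<and> a \<noteq> c \<and> b \<noteq> d \<and> wht D \<inter> blk D = {}"
  using assms unfolding finite_bquad_def by fastforce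

lemma oth_facts:
  assumes "finite_bquad D" "f \<in> fcs D" "v \<in> wht D" "v \<in> fverts D f"
  shows "oth D v f \<in> wht D \<and> oth D v f \<noteq> v \<and> oth D v f \<in> fverts D f"
proof -
  obtain a b c d where q: "qd D f = (a,b,c,d)" by (cases "qd D f") auto
  show ?thesis using face_facts[OF assms(1,2) q] assms(3,4) q
    unfolding oth_def fverts_def by auto
qed

lemma OL:
  assumes "finite_bquad D" "f \<in> fcs D" "v \<in> wht D" "w \<in> wht D" "v \<noteq> w"
    "v \<in> fverts D f" "w \<in> fverts D f"
  shows "w = oth D v f"
proof -
  obtain a b c d where q: "qd D f = (a,b,c,d)" by (cases "qd D f") auto
  show ?thesis using face_facts[OF assms(1,2) q] assms(3-7) q
    unfolding oth_def fverts_def by auto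
qed

lemma UL:
  assumes fb: "finite_bquad D" and f: "f \<in> fcs D" and g: "g \<in> fcs D"
    and "v \<in> wht D" "w \<in> wht D" "v \<noteq> w"
    and "v \<in> fverts D f" "w \<in> fverts D f" "v \<in> fverts D g" "w \<in> fverts D g"
  shows "f = g"
proof (rule ccontr)
  assume ne: "f \<noteq> g"
  obtain a b c d where q: "qd D f = (a,b,c,d)" by (cases "qd D f") auto
  have ff: "a \<in> wht D \<and> c \<in> wht D \<and> b \<in> blk D \<and> d \<in> blk D \<and> a \<noteq> c \<and> b \<noteq> d \<and> wht D \<inter> blk D = {}"
    using face_facts[OF fb f q] .
  let ?I = "fverts D f \<inter> fverts D g"
  have sr: "?I = {} \<or> card ?I = 1 \<or> ?I \<in> fedges D f \<inter> fedges D g"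
    using fb f g ne unfolding finite_bquad_def by blast
  have vw: "v \<in> ?I" "w \<in> ?I" using assms by auto
  have fin: "finite ?I" unfolding fverts_def q by auto
  have "card {v,w} \<le> card ?I" using vw fin by (intro card_mono) auto
  then have c2: "card ?I \<ge> 2" using assms by simp
  have "?I \<in> fedges D f" using sr vw c2 by auto
  then have "?I = {a,b} \<or> ?I = {b,c} \<or> ?I = {c,d} \<or> ?I = {d,a}" unfolding fedges_def q by auto
  then have "{v,w} \<subseteq> {a,b} \<or> {v,w} \<subseteq> {b,c} \<or> {v,w} \<subseteq> {c,d} \<or> {v,w} \<subseteq> {d,a}"
    using vw by (elim disjE) auto
  moreover have "b \<notin> wht D" "d \<notin> wht D" using ff by auto
  ultimately show False using assms(4-6) by auto
qed

lemma nbrs: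
  assumes fb: "finite_bquad D" and v: "v \<in> wht D"
  shows "{w. {v,w} \<in> G_edges D} = oth D v ` faces_at D v"
    and "inj_on (oth D v) (faces_at D v)"
    and "\<And>f. f \<in> faces_at D v \<Longrightarrow> G_face D {v, oth D v f} = f"
proof -
  show "{w. {v,w} \<in> G_edges D} = oth D v ` faces_at D v"
  proof
    show "{w. {v,w} \<in> G_edges D} \<subseteq> oth D v ` faces_at D v"
    proof
      fix w assume "w \<in> {w. {v,w} \<in> G_edges D}"
      then obtain v' w' f where e: "{v,w} = {v',w'}" "v' \<in> wht D" "w' \<in> wht D" "v' \<noteq> w'"
        "f \<in> fcs D" "v' \<in> fverts D f" "w' \<in> fverts D f"
        unfolding G_edges_def by blast
      then have h: "w \<in> wht D" "v \<noteq> w" "v \<in> fverts D f" "w \<in> fverts D f"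
        by (auto simp: doubleton_eq_iff)
      have "w = oth D v f" using OL[OF fb e(5) v h(1,2,3,4)] .
      moreover have "f \<in> faces_at D v" using e(5) h unfolding faces_at_def by auto
      ultimately show "w \<in> oth D v ` faces_at D v" by blast
    qed
  next
    show "oth D v ` faces_at D v \<subseteq> {w. {v,w} \<in> G_edges D}"
    proof
      fix w assume "w \<in> oth D v ` faces_at D v"
      then obtain f where f: "f \<in> fcs D" "v \<in> fverts D f" "w = oth D v f"
        unfolding faces_at_def by auto
      have o: "w \<in> wht D" "w \<noteq> v" "w \<in> fverts D f" using oth_facts[OF fb f(1) v f(2)] f(3) by auto
      show "w \<in> {w. {v,w} \<in> G_edges D}" unfolding G_edges_def using v o f by blast
    qed
  qed
  show "inj_on (oth D v) (faces_at D v)"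
  proof
    fix f g assume f: "f \<in> faces_at D v" and g: "g \<in> faces_at D v" and e: "oth D v f = oth D v g"
    have f': "f \<in> fcs D" "v \<in> fverts D f" and g': "g \<in> fcs D" "v \<in> fverts D g"
      using f g unfolding faces_at_def by auto
    have o1: "oth D v f \<in> wht D" "oth D v f \<noteq> v" "oth D v f \<in> fverts D f"
      using oth_facts[OF fb f'(1) v f'(2)] by auto
    have o2: "oth D v f \<in> fverts D g" using oth_facts[OF fb g'(1) v g'(2)] e by auto
    show "f = g" using UL[OF fb f'(1) g'(1) v o1(1) o1(2)[symmetric] f'(2) o1(3) g'(2) o2] .
  qed
  fix f assume f: "f \<in> faces_at D v"
  have f': "f \<in> fcs D" "v \<in> fverts D f" using f unfolding faces_at_def by auto
  have o1: "oth D v f \<in> wht D" "oth D v f \<noteq> v" "oth D v f \<in> fverts D f"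
    using oth_facts[OF fb f'(1) v f'(2)] by auto
  show "G_face D {v, oth D v f} = f"
    unfolding G_face_def
  proof (rule the_equality)
    show "f \<in> fcs D \<and> {v, oth D v f} \<subseteq> fverts D f" using f' o1 by auto
    fix g assume "g \<in> fcs D \<and> {v, oth D v f} \<subseteq> fverts D g"
    then show "g = f" using UL[OF fb f'(1) _ v o1(1) o1(2)[symmetric] f'(2) o1(3)] by auto
  qed
qed

lemma FL:
  assumes fb: "finite_bquad D" and ad: "admissible D \<alpha>" and cp: "circle_pattern D \<alpha> z r"
    and cq: "convex_q_bounded q D z" and f: "f \<in> fcs D" and v: "v \<in> wht D" and vf: "v \<in> fverts D f"
  shows "kangle D z f v = 2 * phi (\<alpha> f) (r (oth D v f) / r v) \<and> cos (\<alpha> f) \<le> r (oth D v f) / r v"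
proof -
  obtain a b c d where q: "qd D f = (a,b,c,d)" by (cases "qd D f") auto
  have ff: "a \<in> wht D" "c \<in> wht D" "b \<in> blk D" "d \<in> blk D" "a \<noteq> c" "b \<noteq> d" "wht D \<inter> blk D = {}"
    using face_facts[OF fb f q] by auto
  have ne: "b \<noteq> a" "d \<noteq> a" "d \<noteq> c" "b \<noteq> c" "d \<noteq> b" using ff by auto
  have va: "v = a \<or> v = c" using vf ff v unfolding fverts_def q by auto
  have rpos: "r a > 0" "r c > 0" using cp ff unfolding circle_pattern_def by auto
  have al: "0 < \<alpha> f" "\<alpha> f < pi" using ad f unfolding admissible_def by auto
  have fc: "cmod (z b - z a) = r a \<and> cmod (z b - z c) = r c \<and>
        cmod (z d - z a) = r a \<and> cmod (z d - z c) = r c \<and> z b \<noteq> z d \<and>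
        kangle D z f b = \<alpha> f \<and> kangle D z f d = \<alpha> f"
    using cp f q unfolding circle_pattern_def by fastforce
  have kb: "arg2pi ((z a - z b) / (z c - z b)) = \<alpha> f"
    using fc ne unfolding kangle_def q by auto
  have kd: "arg2pi ((z c - z d) / (z a - z d)) = \<alpha> f"
    using fc ne unfolding kangle_def q by auto
  have cv: "convex (convex hull {z a, z b, z c} \<union> convex hull {z a, z c, z d})"
    using cq f q unfolding convex_q_bounded_def kite_def by fastforce
  show ?thesis
  proof (cases "v = a")
    case True
    have k: "kangle D z f v = arg2pi ((z d - z a) / (z b - z a))" unfolding kangle_def q True by simp
    have o: "oth D v f = c" unfolding oth_def q True by simp
    show ?thesis unfolding k o using GL[OF rpos al _ _ _ _ kb kd cv] fc True by auto
  next
    case False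
    then have vc: "v = c" using va by auto
    have k: "kangle D z f v = arg2pi ((z b - z c) / (z d - z c))"
      unfolding kangle_def q vc using ne ff by auto
    have o: "oth D v f = a" unfolding oth_def q using False by simp
    have cv': "convex (convex hull {z c, z d, z a} \<union> convex hull {z c, z a, z b})"
      using cv by (simp add: insert_commute Un_commute)
    show ?thesis unfolding k o using GL[OF rpos(2,1) al _ _ _ _ kd kb cv'] fc vc by auto
  qed
qed



lemma main_ineq:
  assumes fb: "finite_bquad D" and ad: "admissible D \<alpha>"
    and cp: "circle_pattern D \<alpha> z r" and cq: "convex_q_bounded q D z"
    and cpt: "circle_pattern D \<alpha> zt rt" and cqt: "convex_q_bounded q D zt"
    and v: "v \<in> wht D" and iv: "interior_vertex D v"
  shows "laplacian D \<alpha> r (\<lambda>w. rt w / r w) v \<ge> 0"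
proof -
  define F where "F = faces_at D v"
  define ot where "ot = oth D v"
  define y where "y f = r (ot f) / r v" for f
  define yt where "yt f = rt (ot f) / rt v" for f
  have finF: "finite F" using fb unfolding F_def faces_at_def finite_bquad_def by auto
  have Ff: "f \<in> fcs D" "v \<in> fverts D f" if "f \<in> F" for f using that unfolding F_def faces_at_def by auto
  have rv: "r v > 0" "rt v > 0" using cp cpt v unfolding circle_pattern_def by auto
  have ro: "r (ot f) > 0" "rt (ot f) > 0" if "f \<in> F" for f
    using oth_facts[OF fb Ff(1)[OF that] v Ff(2)[OF that]] cp cpt
    unfolding circle_pattern_def ot_def by auto
  have al: "0 < \<alpha> f" "\<alpha> f < pi" if "f \<in> F" for f using ad Ff[OF that] unfolding admissible_def by auto
  have k1: "kangle D z f v = 2 * phi (\<alpha> f) (y f) \<and> cos (\<alpha> f) \<le> y f" if "f \<in> F" for f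
    using FL[OF fb ad cp cq Ff(1)[OF that] v Ff(2)[OF that]] unfolding y_def ot_def by simp
  have k2: "kangle D zt f v = 2 * phi (\<alpha> f) (yt f) \<and> cos (\<alpha> f) \<le> yt f" if "f \<in> F" for f
    using FL[OF fb ad cpt cqt Ff(1)[OF that] v Ff(2)[OF that]] unfolding yt_def ot_def by simp
  have vb: "v \<in> bq_vertices D" using iv unfolding interior_vertex_def by auto
  have s1: "(\<Sum>f\<in>F. kangle D z f v) = 2 * pi" using cp vb iv unfolding circle_pattern_def F_def by auto
  have s2: "(\<Sum>f\<in>F. kangle D zt f v) = 2 * pi" using cpt vb iv unfolding circle_pattern_def F_def by auto
  have p1: "(\<Sum>f\<in>F. phi (\<alpha> f) (y f)) = pi"
  proof -
    have "(\<Sum>f\<in>F. kangle D z f v) = (\<Sum>f\<in>F. 2 * phi (\<alpha> f) (y f))" using k1 by (intro sum.cong) auto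
    then show ?thesis using s1 by (simp add: sum_distrib_left[symmetric])
  qed
  have p2: "(\<Sum>f\<in>F. phi (\<alpha> f) (yt f)) = pi"
  proof -
    have "(\<Sum>f\<in>F. kangle D zt f v) = (\<Sum>f\<in>F. 2 * phi (\<alpha> f) (yt f))" using k2 by (intro sum.cong) auto
    then show ?thesis using s2 by (simp add: sum_distrib_left[symmetric])
  qed
  have ypos: "y f > 0" "yt f > 0" if "f \<in> F" for f using ro[OF that] rv unfolding y_def yt_def by auto
  have ineq: "0 \<le> (\<Sum>f\<in>F. dphi (\<alpha> f) (y f) * (yt f - y f))"
  proof -
    have "(\<Sum>f\<in>F. phi (\<alpha> f) (yt f) - phi (\<alpha> f) (y f)) \<le> (\<Sum>f\<in>F. dphi (\<alpha> f) (y f) * (yt f - y f))"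
      using phi_concave al ypos k1 k2 by (intro sum_mono) auto
    moreover have "(\<Sum>f\<in>F. phi (\<alpha> f) (yt f) - phi (\<alpha> f) (y f)) = 0"
      using p1 p2 by (simp add: sum_subtractf)
    ultimately show ?thesis by simp
  qed
  have lap: "laplacian D \<alpha> r (\<lambda>w. rt w / r w) v =
      (\<Sum>f\<in>F. 2 * fprime (\<alpha> f) (ln (y f)) * (rt (ot f) / r (ot f) - rt v / r v))"
  proof -
    have "laplacian D \<alpha> r (\<lambda>w. rt w / r w) v =
       (\<Sum>w\<in>ot ` F. 2 * fprime (\<alpha> (G_face D {v, w})) (ln (r w / r v)) * (rt w / r w - rt v / r v))"
      unfolding laplacian_def using nbrs(1)[OF fb v] by (simp add: F_def ot_def)
    also have "\<dots> = (\<Sum>f\<in>F. 2 * fprime (\<alpha> (G_face D {v, ot f})) (ln (r (ot f) / r v)) * (rt (ot f) / r (ot f) - rt v / r v))"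
      using nbrs(2)[OF fb v] by (simp add: sum.reindex F_def ot_def)
    also have "\<dots> = (\<Sum>f\<in>F. 2 * fprime (\<alpha> f) (ln (y f)) * (rt (ot f) / r (ot f) - rt v / r v))"
      using nbrs(3)[OF fb v] by (intro sum.cong) (auto simp: F_def ot_def y_def)
    finally show ?thesis .
  qed
  have trm: "2 * fprime (\<alpha> f) (ln (y f)) * (rt (ot f) / r (ot f) - rt v / r v)
       = 2 * (rt v / r v) * (dphi (\<alpha> f) (y f) * (yt f - y f))" if "f \<in> F" for f
  proof -
    have a1: "fprime (\<alpha> f) (ln (y f)) = y f * dphi (\<alpha> f) (y f)" using fprime_ln ypos[OF that] al[OF that] by auto
    have a2: "y f * (rt (ot f) / r (ot f) - rt v / r v) = (rt v / r v) * (yt f - y f)"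
      using ro[OF that] rv unfolding y_def yt_def by (simp add: field_simps)
    have "2 * fprime (\<alpha> f) (ln (y f)) * (rt (ot f) / r (ot f) - rt v / r v)
        = 2 * dphi (\<alpha> f) (y f) * (y f * (rt (ot f) / r (ot f) - rt v / r v))"
      unfolding a1 by (simp only: ac_simps)
    also have "\<dots> = 2 * (rt v / r v) * (dphi (\<alpha> f) (y f) * (yt f - y f))"
      unfolding a2 by (simp only: ac_simps)
    finally show ?thesis .
  qed
  have "laplacian D \<alpha> r (\<lambda>w. rt w / r w) v = 2 * (rt v / r v) * (\<Sum>f\<in>F. dphi (\<alpha> f) (y f) * (yt f - y f))"
    unfolding lap using trm by (simp add: sum_distrib_left)
  then show ?thesis using ineq rv by simp
qed

theorem lemma6p4:
  fixes D :: "('v,'f) bquad" and \<alpha> :: "'f \<Rightarrow> real" and q :: real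
    and z zt :: "'v \<Rightarrow> complex" and r rt :: "'v \<Rightarrow> real"
  assumes "finite_bquad D"
    and "admissible D \<alpha>"
    and "q > 1"
    and "circle_pattern D \<alpha> z r" and "embedded_pattern D z" and "convex_q_bounded q D z"
    and "circle_pattern D \<alpha> zt rt" and "embedded_pattern D zt" and "convex_q_bounded q D zt"
  shows "\<forall>v\<in>wht D. interior_vertex D v \<longrightarrow>
           laplacian D \<alpha> r (\<lambda>w. rt w / r w) v \<ge> 0 \<and>
           laplacian D \<alpha> rt (\<lambda>w. 1 / (rt w / r w)) v \<ge> 0"
proof (intro ballI impI conjI)
  fix v assume v: "v \<in> wht D" and iv: "interior_vertex D v"
  show "laplacian D \<alpha> r (\<lambda>w. rt w / r w) v \<ge> 0"
    using main_ineq[OF assms(1,2,4,6,7,9) v iv] .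
  have "laplacian D \<alpha> rt (\<lambda>w. r w / rt w) v \<ge> 0"
    using main_ineq[OF assms(1,2,7,9,4,6) v iv] .
  then show "laplacian D \<alpha> rt (\<lambda>w. 1 / (rt w / r w)) v \<ge> 0" by simp
qed


end
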